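(* Let $x$ be a real number with $x>(1+\sqrt2)/2$ or $x<(1-\sqrt2)/2$. Then $$\sum_{k=0}^\infty\frac{(2(2x-1)^2(2x-3)k-(4x^3-16x^2+7x+6))4^k}{(x(1-x))^k\binom{4k}{2k}}=(1-x)\left(3R(x)+4x(x-3)\right)$$ and $$\sum_{k=0}^\infty\frac{(2(2x-1)^2(2x+1)k-(4x^3+4x^2-13x-1))4^k}{(x(1-x))^k\binom{4k}{2k}}=-x\left(3R(1-x)+4(x-1)(x+2)\right).$$
   Context: For real $y$ with $y>1$ or $y<0$, define $R(y)=\sqrt y\,\operatorname{arctanh}\frac1{\sqrt y}$, i.e. $R(y)=\frac{\sqrt y}2\log\frac{\sqrt y+1}{\sqrt y-1}$ if $y>1$ and $R(y)=\sqrt{|y|}\arctan\frac1{\sqrt{|y|}}$ if $y<0$. *)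

theory Defs
  imports "HOL-Analysis.Analysis"
begin

text \<open>R(y) = sqrt y * arctanh(1/sqrt y), for y > 1 or y < 0 (real-valued branch).
  Outside this domain the value is irrelevant; we set it to 0.\<close>
definition R :: "real \<Rightarrow> real" where
  "R y = (if y > 1 then sqrt y / 2 * ln ((sqrt y + 1) / (sqrt y - 1))
          else if y < 0 then sqrt \<bar>y\<bar> * arctan (1 / sqrt \<bar>y\<bar>)
          else 0)"

end

theory Submission
  imports Defs "HOL-Analysis.Analysis"
begin


lemma ftc_real:
  fixes f f' :: "real \<Rightarrow> real"
  assumes "a \<le> b" "\<And>y. y \<in> {a..b} \<Longrightarrow> (f has_real_derivative f' y) (at y)"
  shows "(f' has_integral (f b - f a)) {a..b}"
  apply (rule fundamental_theorem_of_calculus[OF assms(1)])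
  using assms(2) by (simp add: has_real_derivative_iff_has_vector_derivative has_vector_derivative_at_within)

lemma wallis:
  "((\<lambda>y::real. (1 - y^2)^n) has_integral (4^n * fact n ^ 2 / fact (2*n+1))) {0..1}"
proof (induction n)
  case 0
  then show ?case using has_integral_const_real[of "1::real" 0 1] by simp
next
  case (Suc n)
  have d: "((\<lambda>y::real. (2*n+3)*(1-y^2)^(n+1) - (2*n+2)*(1-y^2)^n) has_integral
      ((\<lambda>y. y * (1-y^2)^(n+1)) 1 - (\<lambda>y. y * (1-y^2)^(n+1)) 0)) {0..1}"
  proof (rule ftc_real)
    fix y :: real
    show "((\<lambda>y. y * (1-y^2)^(n+1)) has_real_derivative
       ((2*n+3)*(1-y^2)^(n+1) - (2*n+2)*(1-y^2)^n)) (at y)"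
      apply (rule derivative_eq_intros refl | simp)+
      apply (simp add: algebra_simps power2_eq_square)
      done
  qed simp
  have e: "((\<lambda>y::real. (2*n+2)*(1-y^2)^n) has_integral ((2*n+2) * (4^n * fact n ^ 2 / fact (2*n+1)))) {0..1}"
    using has_integral_mult_right[OF Suc.IH] by simp
  have f: "((\<lambda>y::real. (2*n+3)*(1-y^2)^(n+1)) has_integral ((2*n+2) * (4^n * fact n ^ 2 / fact (2*n+1)))) {0..1}"
    using has_integral_add[OF d e] by simp
  have g: "((\<lambda>y::real. (1-y^2)^(n+1)) has_integral ((2*n+2) * (4^n * fact n ^ 2 / fact (2*n+1)))/(2*n+3)) {0..1}"
  proof -
    have "(\<lambda>y::real. 1/(2*n+3) * ((2*n+3)*(1-y^2)^(n+1))) = (\<lambda>y::real. (1-y^2)^(n+1))"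
      by (rule ext) (simp add: divide_simps)
    then show ?thesis using has_integral_mult_right[OF f, of "1/(2*n+3)"] by (simp add: ac_simps)
  qed
  have h: "((2*n+2) * (4^n * fact n ^ 2 / fact (2*n+1)))/(2*n+3) = (4^Suc n * fact (Suc n) ^ 2 / fact (2*Suc n+1) :: real)"
  proof -
    have a: "fact (2*Suc n+1) = (2*n+3)*(2*n+2)*(2*n+1)*(fact (2*n) :: real)"
      by (simp add: algebra_simps)
    have b: "fact (2*n+1) = (2*n+1)*(fact (2*n) :: real)"
      by (simp add: algebra_simps)
    have c: "fact (Suc n) = (n+1)*(fact n :: real)" by simp
    have p: "fact (2*n) > (0::real)" by simp
    show ?thesis unfolding a b c using p apply (simp add: divide_simps del: fact_Suc of_nat_Suc) apply (simp add: algebra_simps power2_eq_square) by (smt (verit) of_nat_0_le_iff mult_nonneg_nonneg)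
  qed
  show ?case using g h by simp
qed



definition Gf :: "real \<Rightarrow> real \<Rightarrow> real \<Rightarrow> real \<Rightarrow> real" where
  "Gf a b c q = (a*q*(1+q) + b*q*(1-q) + c*(1-q)^2)/(1-q)^3"

lemma Gf_step:
  assumes "q \<noteq> 1"
  shows "Gf a b c q - q * Gf a (b+2*a) (a+b+c) q = c"
proof -
  define d where "d = 1 - q"
  have d: "d \<noteq> 0" "q = 1 - d" using assms by (auto simp: d_def)
  show ?thesis unfolding Gf_def d(2) using d(1)
    by (simp add: field_simps power2_eq_square power3_eq_cube)
qed

lemma Gf_partial:
  assumes "q \<noteq> 1"
  shows "(\<Sum>k<n. (a*real k^2 + b*real k + c)*q^k)
     = Gf a b c q - q^n * Gf a (b+2*real n*a) (a*real n^2+b*real n+c) q"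
proof (induction n)
  case 0
  then show ?case by simp
next
  case (Suc n)
  have st: "Gf a (b+2*real n*a) (a*real n^2+b*real n+c) q
     - q * Gf a ((b+2*real n*a)+2*a) (a + (b+2*real n*a) + (a*real n^2+b*real n+c)) q
     = a*real n^2+b*real n+c"
    by (rule Gf_step[OF assms])
  have e1: "b+2*real (Suc n)*a = (b+2*real n*a)+2*a" by (simp add: algebra_simps)
  have e2: "a*real (Suc n)^2+b*real (Suc n)+c = a + (b+2*real n*a) + (a*real n^2+b*real n+c)"
    by (simp add: algebra_simps power2_eq_square)
  show ?case using Suc.IH st unfolding e1 e2
    by (simp add: algebra_simps)
qed

lemma tri3: "\<bar>X+Y+Z\<bar> \<le> \<bar>X\<bar>+\<bar>Y\<bar>+\<bar>Z::real\<bar>" by arith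

lemma Gf_bound:
  assumes "-1 \<le> q" "q \<le> 0"
  shows "\<bar>Gf a b c q\<bar> \<le> \<bar>a\<bar> + \<bar>b\<bar> + \<bar>c\<bar>"
proof -
  have p: "1 \<le> 1 - q" using assms by simp
  have eq: "Gf a b c q = a * (q*(1+q)/(1-q)^3) + b * (q/(1-q)^2) + c * (1/(1-q))"
  proof -
    define d where "d = 1 - q"
    have d: "d \<noteq> 0" "q = 1 - d" using p by (auto simp: d_def)
    show ?thesis unfolding Gf_def d(2) using d(1)
      by (simp add: field_simps power2_eq_square power3_eq_cube)
  qed
  have b1: "\<bar>q*(1+q)/(1-q)^3\<bar> \<le> 1"
  proof -
    have s1: "0 \<le> (q+1/2)^2" by simp
    have s2: "q*(1+q) \<le> 0" using assms by (simp add: mult_nonpos_nonneg)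
    have "\<bar>q*(1+q)\<bar> \<le> 1" using s1 s2 by (simp add: power2_eq_square algebra_simps abs_le_iff)
    moreover have "1 \<le> (1-q)^3" using p by (simp add: one_le_power)
    ultimately have h2: "\<bar>q*(1+q)\<bar> \<le> (1-q)^3" "0 < (1-q)^3" by linarith+
    have "\<bar>q*(1+q)/(1-q)^3\<bar> = \<bar>q*(1+q)\<bar>/(1-q)^3" using h2(2) by (simp add: abs_div del: abs_mult)
    also have "\<dots> \<le> 1" using h2 by (simp add: divide_le_eq_1)
    finally show ?thesis .
  qed
  have b2: "\<bar>q/(1-q)^2\<bar> \<le> 1"
  proof -
    have h1: "1 \<le> (1-q)^2" using p by (simp add: one_le_power)
    have h2: "\<bar>q\<bar> \<le> (1-q)^2" using h1 assms by linarith
    have h3: "0 < (1-q)^2" using h1 by linarith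
    have "\<bar>q/(1-q)^2\<bar> = \<bar>q\<bar>/(1-q)^2" by (simp add: abs_div)
    also have "\<dots> \<le> 1" using h2 h3 by (simp add: divide_le_eq_1)
    finally show ?thesis .
  qed
  have b3: "\<bar>1/(1-q)\<bar> \<le> 1" using p by simp
  have "\<bar>Gf a b c q\<bar> \<le> \<bar>a\<bar> * \<bar>q*(1+q)/(1-q)^3\<bar> + \<bar>b\<bar> * \<bar>q/(1-q)^2\<bar> + \<bar>c\<bar> * \<bar>1/(1-q)\<bar>"
    unfolding eq abs_mult[symmetric] by (rule tri3)
  also have "\<dots> \<le> \<bar>a\<bar> + \<bar>b\<bar> + \<bar>c\<bar>"
    using b1 b2 b3 by (intro add_mono mult_left_le) auto
  finally show ?thesis .
qed



lemma deriv_ln_comp: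
  fixes f :: "real \<Rightarrow> real"
  assumes "0 < f y" "(f has_real_derivative d) (at y)"
  shows "((\<lambda>y. ln (f y)) has_real_derivative d / f y) (at y)"
  using DERIV_chain2[OF DERIV_ln_divide[OF assms(1)] assms(2)] by simp

lemma deriv_arctan_comp:
  fixes f :: "real \<Rightarrow> real"
  assumes "(f has_real_derivative d) (at y)"
  shows "((\<lambda>y. arctan (f y)) has_real_derivative inverse (1 + (f y)^2) * d) (at y)"
  using DERIV_chain2[OF DERIV_arctan assms] by simp

lemma alg_log:
  fixes Q s y :: real
  assumes "Q + 2 * s * y > 0" "Q - 2 * s * y > 0"
  shows "s/2*((2*y+2 * s)/(Q+2 * s*y) - (2*y-2 * s)/(Q-2 * s*y)) = 2 * s^2*(Q-2*y^2)/((Q+2 * s*y)*(Q-2 * s*y))"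
proof -
  have "(2*y+2 * s)/(Q+2 * s*y) - (2*y-2 * s)/(Q-2 * s*y)
      = ((2*y+2 * s)*(Q-2 * s*y) - (2*y-2 * s)*(Q+2 * s*y))/((Q+2 * s*y)*(Q-2 * s*y))"
    using assms by (simp add: diff_frac_eq)
  moreover have "s/2*((2*y+2 * s)*(Q-2 * s*y) - (2*y-2 * s)*(Q+2 * s*y)) = 2 * s^2*(Q-2*y^2)"
    by algebra
  ultimately show ?thesis by (metis times_divide_eq_right)
qed

lemma alg_arctan:
  fixes P m y :: real
  assumes "P \<noteq> 0"
  shows "-m*(inverse(1 + (2*m*y/P)^2) * ((2*m*P - 2*m*y*(2*y))/(P*P))) = -2*m^2*(P - 2*y^2)/(P^2 + (2*m*y)^2)"
proof -
  define S where "S = P^2 + (2*m*y)^2"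
  have pos: "S > 0" using assms by (simp add: S_def add_pos_nonneg)
  have "1 + (2*m*y/P)^2 = S/P^2" using assms by (simp add: S_def field_simps)
  then have i: "inverse (1 + (2*m*y/P)^2) = P^2/S" by simp
  have "P^2/S * ((2*m*P - 2*m*y*(2*y))/(P*P)) = (2*m*P - 2*m*y*(2*y))/S"
    using assms by (simp add: power2_eq_square)
  moreover have "-m*(2*m*P - 2*m*y*(2*y)) = -2*m^2*(P - 2*y^2)" by algebra
  ultimately show ?thesis unfolding i S_def[symmetric] by (metis times_divide_eq_right)
qed

lemma Kint:
  fixes x :: real
  assumes "x > 1 \<or> x < 0"
  shows "((\<lambda>y. 2*x*(2*x-1-y^2)/(y^4 - 2*y^2 + (2*x-1)^2)) has_integral R x) {0..1}"
  using assms
proof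
  assume x1: "x > 1"
  define s where "s = sqrt x"
  have s1: "s > 1" using x1 by (simp add: s_def)
  have xs: "x = s^2" using x1 by (simp add: s_def)
  have s2: "1 < s^2" using s1 by (simp add: one_less_power)
  have pp: "0 < y^2 + 2 * s^2 - 1 + 2 * s * y" if "0 \<le> y" for y :: real
  proof -
    have "0 \<le> 2 * s * y" using s1 that by simp
    moreover have "0 \<le> y^2" by simp
    ultimately show ?thesis using s2 by linarith
  qed
  have pm: "0 < y^2 + 2 * s^2 - 1 - 2 * s * y" for y :: real
  proof -
    have "y^2 + 2 * s^2 - 1 - 2 * s * y = (y - s)^2 + (s^2 - 1)" by (simp add: power2_eq_square algebra_simps)
    moreover have "0 \<le> (y - s)^2" by simp
    ultimately show ?thesis using s2 by linarith
  qed
  define G where "G y = s/2 * (ln (y^2 + 2 * s^2 - 1 + 2 * s * y) - ln (y^2 + 2 * s^2 - 1 - 2 * s * y))" for y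
  have "((\<lambda>y. 2*x*(2*x-1-y^2)/(y^4 - 2*y^2 + (2*x-1)^2)) has_integral (G 1 - G 0)) {0..1}"
  proof (rule ftc_real)
    fix y :: real assume y: "y \<in> {0..1}"
    have a: "0 < y^2 + 2 * s^2 - 1 + 2 * s * y" using pp y by simp
    have b: "0 < y^2 + 2 * s^2 - 1 - 2 * s * y" using pm by simp
    have d1: "((\<lambda>y. y^2 + 2 * s^2 - 1 + 2 * s * y) has_real_derivative 2*y + 2 * s) (at y)"
      by (auto intro!: derivative_eq_intros)
    have d2: "((\<lambda>y. y^2 + 2 * s^2 - 1 - 2 * s * y) has_real_derivative 2*y - 2 * s) (at y)"
      by (auto intro!: derivative_eq_intros)
    have "(G has_real_derivative s/2 * ((2*y + 2 * s)/(y^2 + 2 * s^2 - 1 + 2 * s * y) - (2*y - 2 * s)/(y^2 + 2 * s^2 - 1 - 2 * s * y))) (at y)"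
      unfolding G_def
      by (intro DERIV_cmult DERIV_diff deriv_ln_comp a b d1 d2)
    moreover have "s/2 * ((2*y + 2 * s)/(y^2 + 2 * s^2 - 1 + 2 * s * y) - (2*y - 2 * s)/(y^2 + 2 * s^2 - 1 - 2 * s * y))
        = 2*x*(2*x-1-y^2)/(y^4 - 2*y^2 + (2*x-1)^2)"
    proof -
      have e: "y^4 - 2*y^2 + (2*x-1)^2 = ((y^2 + 2 * s^2 - 1) + 2 * s * y) * ((y^2 + 2 * s^2 - 1) - 2 * s * y)"
        unfolding xs by algebra
      have e2: "2*x*(2*x-1-y^2) = 2 * s^2*((y^2 + 2 * s^2 - 1) - 2*y^2)"
        unfolding xs by algebra
      show ?thesis unfolding e e2 using alg_log[of "y^2 + 2 * s^2 - 1" s y] a b by (simp add: ac_simps)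
    qed
    ultimately show "(G has_real_derivative 2*x*(2*x-1-y^2)/(y^4 - 2*y^2 + (2*x-1)^2)) (at y)"
      by (metis DERIV_cong)
  qed simp
  moreover have "G 1 - G 0 = R x"
  proof -
    have "G 0 = 0" unfolding G_def by simp
    moreover have "G 1 = s/2 * ln ((s+1)/(s-1))"
    proof -
      have "ln (1 + 2 * s^2 - 1 + 2 * s) - ln (1 + 2 * s^2 - 1 - 2 * s) = ln ((1 + 2 * s^2 - 1 + 2 * s) / (1 + 2 * s^2 - 1 - 2 * s))"
        using pp[of 1] pm[of 1] by (simp add: ln_div)
      also have "(1 + 2 * s^2 - 1 + 2 * s) / (1 + 2 * s^2 - 1 - 2 * s) = (s+1)/(s-1)"
        using s1 by (simp add: field_simps power2_eq_square)
      finally show ?thesis unfolding G_def by simp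
    qed
    ultimately show ?thesis using x1 unfolding R_def s_def by simp
  qed
  ultimately show ?thesis by simp
next
  assume x0: "x < 0"
  define m where "m = sqrt (-x)"
  have m0: "m > 0" using x0 by (simp add: m_def)
  have xm: "x = - (m^2)" using x0 by (simp add: m_def)
  have neg: "y^2 - 2*m^2 - 1 < 0" if "y \<in> {0..1}" for y :: real
  proof -
    have "y^2 \<le> 1" using that by (simp add: power_le_one)
    moreover have "0 < m^2" using m0 by simp
    ultimately show ?thesis by linarith
  qed
  define G where "G y = - m * arctan (2*m*y/(y^2 - 2*m^2 - 1))" for y
  have "((\<lambda>y. 2*x*(2*x-1-y^2)/(y^4 - 2*y^2 + (2*x-1)^2)) has_integral (G 1 - G 0)) {0..1}"
  proof (rule ftc_real)
    fix y :: real assume y: "y \<in> {0..1}"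
    have a: "y^2 - 2*m^2 - 1 \<noteq> 0" using neg[OF y] by simp
    have d1: "((\<lambda>y. 2*m*y) has_real_derivative 2*m) (at y)"
      by (auto intro!: derivative_eq_intros)
    have d2: "((\<lambda>y. y^2 - 2*m^2 - 1) has_real_derivative 2*y) (at y)"
      by (auto intro!: derivative_eq_intros)
    have "(G has_real_derivative -m*(inverse(1 + (2*m*y/(y^2 - 2*m^2 - 1))^2) *
         ((2*m*(y^2 - 2*m^2 - 1) - 2*m*y*(2*y))/((y^2 - 2*m^2 - 1)*(y^2 - 2*m^2 - 1))))) (at y)"
      unfolding G_def
      by (intro DERIV_cmult deriv_arctan_comp DERIV_divide d1 d2 a)
    moreover have "-m*(inverse(1 + (2*m*y/(y^2 - 2*m^2 - 1))^2) *
         ((2*m*(y^2 - 2*m^2 - 1) - 2*m*y*(2*y))/((y^2 - 2*m^2 - 1)*(y^2 - 2*m^2 - 1))))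
        = 2*x*(2*x-1-y^2)/(y^4 - 2*y^2 + (2*x-1)^2)"
    proof -
      have e: "y^4 - 2*y^2 + (2*x-1)^2 = (y^2 - 2*m^2 - 1)^2 + (2*m*y)^2"
        unfolding xm by algebra
      have e2: "2*x*(2*x-1-y^2) = -2*m^2*((y^2 - 2*m^2 - 1) - 2*y^2)"
        unfolding xm by algebra
      show ?thesis unfolding e e2 using alg_arctan[OF a, of m] by simp
    qed
    ultimately show "(G has_real_derivative 2*x*(2*x-1-y^2)/(y^4 - 2*y^2 + (2*x-1)^2)) (at y)"
      by (metis DERIV_cong)
  qed simp
  moreover have "G 1 - G 0 = R x"
  proof -
    have "G 0 = 0" unfolding G_def by simp
    moreover have "G 1 = m * arctan (1/m)"
    proof -
      have "2*m*1/(1^2 - 2*m^2 - 1) = - (1/m)" using m0 by (simp add: field_simps power2_eq_square)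
      then show ?thesis unfolding G_def by (simp add: arctan_minus)
    qed
    ultimately show ?thesis using x0 unfolding R_def m_def by simp
  qed
  ultimately show ?thesis by simp
qed



definition u1 :: "real \<Rightarrow> real" where "u1 x = 6*x + 210*x^2 - 768*x^3 + 1144*x^4 - 912*x^5 + 384*x^6 - 64*x^7"
definition u3 :: "real \<Rightarrow> real" where "u3 x = -18*x - 342*x^2 + 944*x^3 - 808*x^4 + 224*x^5"
definition u5 :: "real \<Rightarrow> real" where "u5 x = 18*x + 126*x^2 - 368*x^3 + 304*x^4 - 80*x^5"
definition u7 :: "real \<Rightarrow> real" where "u7 x = -6*x + 6*x^2"
definition Uf :: "real \<Rightarrow> real \<Rightarrow> real" where "Uf x y = u1 x * y + u3 x * y^3 + u5 x * y^5 + u7 x * y^7"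
definition Upf :: "real \<Rightarrow> real \<Rightarrow> real" where "Upf x y = u1 x + 3 * u3 x * y^2 + 5 * u5 x * y^4 + 7 * u7 x * y^6"
definition Df :: "real \<Rightarrow> real \<Rightarrow> real" where "Df x y = y^4 - 2*y^2 + (2*x-1)^2"
definition Ac :: "real \<Rightarrow> real" where "Ac x = 2*(2*x-1)^2*(2*x-3)"
definition Bc :: "real \<Rightarrow> real" where "Bc x = -(4*x^3-16*x^2+7*x+6)"

lemma polyid2:
  fixes x y :: real
  shows "-4*(x*(1-x))*(4*Ac x*(1-y^2)^2*(4*(x*(1-x))+(1-y^2)^2) + (Ac x+4*Bc x)*(1-y^2)^2*(4*(x*(1-x))-(1-y^2)^2) + Bc x*(4*(x*(1-x))-(1-y^2)^2)^2)
     = 6*x*(1-x)*(2*x-1-y^2)*Df x y^2 + Upf x y * Df x y - 2*Uf x y*(4*y^3-4*y)"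
  unfolding Ac_def Bc_def Df_def Upf_def Uf_def u1_def u3_def u5_def u7_def by algebra

lemma Gf_sub:
  fixes T S d :: real
  assumes "T \<noteq> 0" "d \<noteq> 0" "T - S = d"
  shows "Gf a b c (S/T) = T*(a*S*(T+S) + b*S*d + c*d^2)/d^3"
proof -
  have e1: "1 + S/T = (T+S)/T" and e2: "1 - S/T = d/T" using assms by (simp_all add: field_simps)
  show ?thesis unfolding Gf_def e1 e2 using assms(1,2)
    by (simp add: field_simps power2_eq_square power3_eq_cube)
qed

lemma Df_pos:
  assumes "x*(1-x) < 0"
  shows "Df x y > 0"
proof -
  have "Df x y = (1-y^2)^2 - 4*(x*(1-x))" unfolding Df_def by algebra
  moreover have "0 \<le> (1-y^2)^2" by simp
  ultimately show ?thesis using assms by linarith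
qed

lemma Fid:
  fixes x y :: real
  assumes t: "x*(1-x) < 0"
  shows "Gf (4*Ac x) (Ac x+4*Bc x) (Bc x) ((1-y^2)^2/(4*(x*(1-x))))
     = 3*(1-x)*(2*x*(2*x-1-y^2)/Df x y) + (Upf x y * Df x y - 2*Uf x y*(4*y^3-4*y))/Df x y^3"
proof -
  define T where "T = 4*(x*(1-x))"
  define S where "S = (1-y^2)^2"
  have D: "Df x y > 0" using Df_pos[OF t] .
  have TS: "T - S = - Df x y" unfolding T_def S_def Df_def by algebra
  have T0: "T \<noteq> 0" using t unfolding T_def by linarith
  have "Gf (4*Ac x) (Ac x+4*Bc x) (Bc x) (S/T) = T*(4*Ac x*S*(T+S) + (Ac x+4*Bc x)*S*(T-S) + Bc x*(T-S)^2)/(T-S)^3"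
    by (rule Gf_sub) (use T0 TS D in simp_all)
  also have "\<dots> = (6*x*(1-x)*(2*x-1-y^2)*Df x y^2 + Upf x y * Df x y - 2*Uf x y*(4*y^3-4*y)) / Df x y ^3"
  proof -
    have "-T*(4*Ac x*S*(T+S) + (Ac x+4*Bc x)*S*(T-S) + Bc x*(T-S)^2) = 6*x*(1-x)*(2*x-1-y^2)*Df x y^2 + Upf x y * Df x y - 2*Uf x y*(4*y^3-4*y)"
      unfolding T_def S_def using polyid2[of x y] by simp
    then have eqA: "-(T*(4*Ac x*S*(T+S) + (Ac x+4*Bc x)*S*(T-S) + Bc x*(T-S)^2)) = 6*x*(1-x)*(2*x-1-y^2)*Df x y^2 + Upf x y * Df x y - 2*Uf x y*(4*y^3-4*y)"
      by simp
    have c: "(T-S)^3 = -(Df x y^3)" unfolding TS by simp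
    show ?thesis unfolding c divide_minus_right minus_divide_left eqA ..
  qed
  also have "\<dots> = 3*(1-x)*(2*x*(2*x-1-y^2)/Df x y) + (Upf x y * Df x y - 2*Uf x y*(4*y^3-4*y))/Df x y^3"
    using D by (simp add: field_simps power3_eq_cube power2_eq_square)
  finally show ?thesis unfolding T_def S_def .
qed

lemma W_deriv:
  assumes "Df x y \<noteq> 0"
  shows "((\<lambda>y. Uf x y / Df x y ^ 2) has_real_derivative (Upf x y * Df x y - 2*Uf x y*(4*y^3-4*y))/Df x y^3) (at y)"
proof -
  have dU: "((\<lambda>y. Uf x y) has_real_derivative Upf x y) (at y)"
    unfolding Uf_def Upf_def by (auto intro!: derivative_eq_intros simp: algebra_simps)
  have dD: "((\<lambda>y. Df x y) has_real_derivative (4*y^3-4*y)) (at y)"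
    unfolding Df_def by (auto intro!: derivative_eq_intros simp: algebra_simps)
  have dD2: "((\<lambda>y. Df x y ^ 2) has_real_derivative 2 * Df x y * (4*y^3-4*y)) (at y)"
    using DERIV_power[OF dD, of 2] by (rule DERIV_cong) simp
  have "((\<lambda>y. Uf x y / Df x y ^ 2) has_real_derivative (Upf x y * Df x y ^ 2 - Uf x y * (2 * Df x y * (4*y^3-4*y))) / (Df x y ^ 2 * Df x y ^ 2)) (at y)"
    using DERIV_divide[OF dU dD2] assms by simp
  moreover have "(Upf x y * Df x y ^ 2 - Uf x y * (2 * Df x y * (4*y^3-4*y))) / (Df x y ^ 2 * Df x y ^ 2)
     = (Upf x y * Df x y - 2*Uf x y*(4*y^3-4*y))/Df x y^3"
    using assms by (simp add: field_simps power2_eq_square power3_eq_cube)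
  ultimately show ?thesis by (metis DERIV_cong)
qed

lemma W_vals:
  assumes "x*(1-x) \<noteq> 0"
  shows "Uf x 1 / Df x 1 ^ 2 - Uf x 0 / Df x 0 ^ 2 = (1-x)*(4*x*(x-3))"
proof -
  define P where "P = x*(1-x)"
  have d1: "Df x 1 = -4*P" unfolding Df_def P_def by (simp add: algebra_simps power2_eq_square)
  have u: "Uf x 1 = (1-x)*(4*x*(x-3)) * (16*P^2)"
    unfolding Uf_def u1_def u3_def u5_def u7_def P_def apply (simp only: power_one mult_1_right) by algebra
  have u0: "Uf x 0 = 0" unfolding Uf_def by simp
  have P0: "P \<noteq> 0" using assms by (simp add: P_def)
  have "(-4*P)^2 = 16*P^2" by algebra
  then show ?thesis unfolding d1 u u0 using P0 by simp
qed



lemma gen: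
  fixes Z K T F4 F2 a :: real
  assumes "K \<noteq> 0" "T \<noteq> 0" "F4 \<noteq> 0" "F2 \<noteq> 0" "a \<noteq> 0"
  shows "Z*K/(a*T) * (a*a*F2^2/(K*F4)) = Z*a/(T*(F4/(F2*F2)))"
  using assms by (simp add: field_simps power2_eq_square)

lemma term_integral:
  fixes x :: real and k :: nat
  assumes t: "x*(1-x) \<noteq> 0"
  shows "((\<lambda>y. (4*Ac x*real k^2 + (Ac x+4*Bc x)*real k + Bc x) * ((1-y^2)^2/(4*(x*(1-x))))^k) has_integral
     (((2*(2*x-1)^2*(2*x-3)*real k - (4*x^3-16*x^2+7*x+6))*4^k) / ((x*(1-x))^k * real ((4*k) choose (2*k))))) {0..1}"
proof -
  define t where "t = x*(1-x)"
  define c where "c = (4*Ac x*real k^2 + (Ac x+4*Bc x)*real k + Bc x) / (4*t)^k"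
  have w: "((\<lambda>y::real. (1 - y^2)^(2*k)) has_integral (4^(2*k) * fact (2*k) ^ 2 / fact (2*(2*k)+1))) {0..1}"
    by (rule wallis)
  have fe: "(\<lambda>y. (4*Ac x*real k^2 + (Ac x+4*Bc x)*real k + Bc x) * ((1-y^2)^2/(4*t))^k) = (\<lambda>y. c * (1-y^2)^(2*k))"
    by (rule ext) (simp add: c_def power_divide power_mult)
  have i: "((\<lambda>y. (4*Ac x*real k^2 + (Ac x+4*Bc x)*real k + Bc x) * ((1-y^2)^2/(4*t))^k) has_integral
      c * (4^(2*k) * fact (2*k) ^ 2 / fact (2*(2*k)+1))) {0..1}"
    unfolding fe by (rule has_integral_mult_right[OF w])
  have v: "c * (4^(2*k) * fact (2*k) ^ 2 / fact (2*(2*k)+1)) =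
     (((2*(2*x-1)^2*(2*x-3)*real k - (4*x^3-16*x^2+7*x+6))*4^k) / ((x*(1-x))^k * real ((4*k) choose (2*k))))"
  proof -
    have b: "real ((4*k) choose (2*k)) = fact (4*k) / (fact (2*k) * fact (2*k))"
      by (simp add: binomial_fact mult_2[symmetric])
    have f: "fact (2*(2*k)+1) = (4*real k+1) * (fact (4*k) :: real)"
      by (simp add: algebra_simps)
    have p: "(4::real)^(2*k) = 4^k * 4^k" by (simp add: mult_2 power_add)
    have q: "(4*t)^k = 4^k * t^k" by (simp add: power_mult_distrib)
    have ab: "4*Ac x*real k^2 + (Ac x+4*Bc x)*real k + Bc x = (2*(2*x-1)^2*(2*x-3)*real k - (4*x^3-16*x^2+7*x+6)) * (4*real k+1)"
      unfolding Ac_def Bc_def by (simp add: algebra_simps power2_eq_square)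
    have t0: "t^k \<noteq> 0" using t by (simp add: t_def)
    have f0: "fact (4*k) \<noteq> (0::real)" "fact (2*k) \<noteq> (0::real)" by simp_all
    have k0: "4*real k+1 \<noteq> 0" by (simp add: add_nonneg_pos)
    have a0: "(4::real)^k \<noteq> 0" by simp
    show ?thesis unfolding c_def b f p q ab t_def[symmetric]
      by (rule gen) (use t0 f0 k0 a0 in auto)
  qed
  show ?thesis using i unfolding v t_def .
qed



lemma poly_geom_zero:
  fixes r C0 C1 C2 :: real
  assumes "0 \<le> r" "r < 1"
  shows "(\<lambda>n. r^n * (C0 + C1*real n + C2*real n^2)) \<longlonglongrightarrow> 0"
proof -
  define \<rho> where "\<rho> = sqrt r"
  have \<rho>: "0 \<le> \<rho>" "\<rho> < 1" "\<rho> * \<rho> = r" using assms by (auto simp: \<rho>_def)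
  have l0: "(\<lambda>n. r^n) \<longlonglongrightarrow> 0" by (rule LIMSEQ_power_zero) (use assms in simp)
  have l1: "(\<lambda>n. real n * r^n) \<longlonglongrightarrow> 0" using powser_times_n_limit_0[of r] assms by simp
  have l2: "(\<lambda>n. real n * \<rho>^n) \<longlonglongrightarrow> 0" using powser_times_n_limit_0[of \<rho>] \<rho> by simp
  have l: "(\<lambda>n. C0 * r^n + C1 * (real n * r^n) + C2 * ((real n * \<rho>^n) * (real n * \<rho>^n))) \<longlonglongrightarrow> C0*0 + C1*0 + C2*(0*0)"
    by (intro tendsto_add tendsto_mult tendsto_const l0 l1 l2)
  have eq: "(\<lambda>n. C0 * r^n + C1 * (real n * r^n) + C2 * ((real n * \<rho>^n) * (real n * \<rho>^n))) = (\<lambda>n. r^n * (C0 + C1*real n + C2*real n^2))"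
  proof (rule ext)
    fix n
    have "\<rho>^n * \<rho>^n = r^n" using \<rho>(3) by (metis power_mult_distrib)
    then show "C0 * r^n + C1 * (real n * r^n) + C2 * ((real n * \<rho>^n) * (real n * \<rho>^n)) = r^n * (C0 + C1*real n + C2*real n^2)"
      by (simp add: algebra_simps power2_eq_square)
  qed
  show ?thesis using l unfolding eq by simp
qed

lemma Df_ne: "x*(1-x) < 0 \<Longrightarrow> Df x y \<noteq> 0"
  using Df_pos[of x y] by linarith

lemma main1:
  fixes x :: real
  assumes hx: "4*x*(1-x) < -1"
  shows "(\<lambda>k. ((2*(2*x-1)^2*(2*x-3)*real k - (4*x^3-16*x^2+7*x+6))*4^k) / ((x*(1-x))^k * real ((4*k) choose (2*k))))
     sums ((1-x)*(3*R x + 4*x*(x-3)))"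
proof -
  define t where "t = x*(1-x)"
  have t4: "4*t < -1" using hx by (simp add: t_def mult.assoc)
  have t0: "t < 0" using t4 by linarith
  have tn: "x*(1-x) < 0" "x*(1-x) \<noteq> 0" using t0 unfolding t_def by linarith+
  have x10: "x > 1 \<or> x < 0"
  proof (rule ccontr)
    assume "\<not> (x > 1 \<or> x < 0)"
    then have "0 \<le> x" "0 \<le> 1 - x" by auto
    then have "0 \<le> x*(1-x)" by simp
    then show False using tn by linarith
  qed
  define al where "al = 4*Ac x"
  define be where "be = Ac x+4*Bc x"
  define ga where "ga = Bc x"
  define q where "q y = (1-y^2)^2/(4*(x*(1-x)))" for y :: real
  define a where "a k = ((2*(2*x-1)^2*(2*x-3)*real k - (4*x^3-16*x^2+7*x+6))*4^k) / ((x*(1-x))^k * real ((4*k) choose (2*k)))" for k :: nat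
  define IF where "IF = (1-x)*(3*R x + 4*x*(x-3))"
  define S where "S n = (\<Sum>k<n. a k)" for n
  define p where "p n = al*real n^2 + be*real n + ga" for n :: nat
  define E where "E n y = q y ^ n * Gf al (be+2*real n*al) (p n) (q y)" for n :: nat and y :: real
  define r where "r = 1/(-(4*t))"
  have r: "0 \<le> r" "r < 1" using t4 t0 by (simp_all add: r_def divide_simps)
  have qle: "q y \<le> 0" for y
    unfolding q_def using tn by (simp add: divide_nonneg_neg)
  have qb: "-1 \<le> q y" "\<bar>q y\<bar> \<le> r" if "y \<in> {0..1}" for y
  proof -
    have "0 \<le> 1 - y^2" "1 - y^2 \<le> 1" using that by (auto simp: power_le_one)
    then have sv: "0 \<le> (1-y^2)^2" "(1-y^2)^2 \<le> 1" by (auto simp: power_le_one)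
    have qt: "q y = (1-y^2)^2/(4*t)" by (simp add: q_def t_def)
    have "\<bar>q y\<bar> = - q y" using qle[of y] by simp
    also have "\<dots> = (1-y^2)^2/(-(4*t))" unfolding qt by (rule minus_divide_right)
    also have "\<dots> \<le> 1/(-(4*t))" using sv t0 by (intro divide_right_mono) auto
    finally show "\<bar>q y\<bar> \<le> r" unfolding r_def .
    then show "-1 \<le> q y" using r by linarith
  qed
  have hint: "((\<lambda>y. \<Sum>k<n. (al*real k^2+be*real k+ga)*q y^k) has_integral S n) {0..1}" for n
    unfolding S_def
    by (rule has_integral_sum) (auto simp: al_def be_def ga_def q_def a_def intro: term_integral[OF tn(2)])
  have Fint: "((\<lambda>y. Gf al be ga (q y)) has_integral IF) {0..1}"
  proof -
    have K: "((\<lambda>y. 3*(1-x)*(2*x*(2*x-1-y^2)/Df x y)) has_integral (3*(1-x)*R x)) {0..1}"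
      using has_integral_mult_right[OF Kint[OF x10, unfolded Df_def[symmetric]], of "3*(1-x)"] .
    have W: "((\<lambda>y. (Upf x y * Df x y - 2*Uf x y*(4*y^3-4*y))/Df x y^3) has_integral
        (Uf x 1 / Df x 1 ^ 2 - Uf x 0 / Df x 0 ^ 2)) {0..1}"
      by (rule ftc_real[of 0 1 "\<lambda>y. Uf x y / Df x y ^ 2", simplified])
         (rule W_deriv, rule Df_ne[OF tn(1)])
    have "((\<lambda>y. 3*(1-x)*(2*x*(2*x-1-y^2)/Df x y) + (Upf x y * Df x y - 2*Uf x y*(4*y^3-4*y))/Df x y^3)
        has_integral (3*(1-x)*R x + (1-x)*(4*x*(x-3)))) {0..1}"
      using has_integral_add[OF K W] unfolding W_vals[OF tn(2)] .
    moreover have "(\<lambda>y. Gf al be ga (q y)) = (\<lambda>y. 3*(1-x)*(2*x*(2*x-1-y^2)/Df x y) + (Upf x y * Df x y - 2*Uf x y*(4*y^3-4*y))/Df x y^3)"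
      by (rule ext) (unfold al_def be_def ga_def q_def, rule Fid[OF tn(1)])
    moreover have "3*(1-x)*R x + (1-x)*(4*x*(x-3)) = IF" by (simp add: IF_def algebra_simps)
    ultimately show ?thesis by simp
  qed
  have Eint: "((E n) has_integral (IF - S n)) {0..1}" for n
  proof -
    have "((\<lambda>y. Gf al be ga (q y) - (\<Sum>k<n. (al*real k^2+be*real k+ga)*q y^k)) has_integral (IF - S n)) {0..1}"
      by (rule has_integral_diff[OF Fint hint])
    moreover have "(\<lambda>y. Gf al be ga (q y) - (\<Sum>k<n. (al*real k^2+be*real k+ga)*q y^k)) = E n"
    proof (rule ext)
      fix y
      have "q y \<noteq> 1" using qle[of y] by linarith
      then show "Gf al be ga (q y) - (\<Sum>k<n. (al*real k^2+be*real k+ga)*q y^k) = E n y"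
        unfolding E_def p_def using Gf_partial[where q="q y" and n=n and a=al and b=be and c=ga] by simp
    qed
    ultimately show ?thesis by simp
  qed
  define B where "B n = r^n * (\<bar>al\<bar> + \<bar>be+2*real n*al\<bar> + \<bar>p n\<bar>)" for n :: nat
  have Ebound: "\<bar>E n y\<bar> \<le> B n" if "y \<in> {0..1}" for n y
  proof -
    have "\<bar>q y ^ n\<bar> \<le> r^n" unfolding power_abs by (rule power_mono) (use qb[OF that] in auto)
    moreover have "\<bar>Gf al (be+2*real n*al) (p n) (q y)\<bar> \<le> \<bar>al\<bar> + \<bar>be+2*real n*al\<bar> + \<bar>p n\<bar>"
      by (rule Gf_bound) (use qb[OF that] qle[of y] in auto)
    ultimately show ?thesis unfolding E_def B_def abs_mult
      by (rule mult_mono) (auto simp: r(1))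
  qed
  have diffb: "\<bar>IF - S n\<bar> \<le> B n" for n
  proof -
    have "norm (IF - S n) \<le> B n * Henstock_Kurzweil_Integration.content (cbox 0 (1::real))"
      by (rule has_integral_bound[of "B n" "E n"]) (use Eint[of n] Ebound[of _ n] r in \<open>auto simp: B_def\<close>)
    then show ?thesis by simp
  qed
  define C where "C n = r^n * ((\<bar>al\<bar>+\<bar>be\<bar>+\<bar>ga\<bar>) + (2*\<bar>al\<bar>+\<bar>be\<bar>)*real n + \<bar>al\<bar>*real n^2)" for n :: nat
  have BC: "B n \<le> C n" for n
  proof -
    have a1: "\<bar>be+2*real n*al\<bar> \<le> \<bar>be\<bar> + 2*real n*\<bar>al\<bar>"
      using abs_triangle_ineq[of be "2*real n*al"] by (simp add: abs_mult)
    have a2: "\<bar>p n\<bar> \<le> \<bar>al\<bar>*real n^2 + \<bar>be\<bar>*real n + \<bar>ga\<bar>"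
      using tri3[of "al*real n^2" "be*real n" ga] unfolding p_def by (simp add: abs_mult)
    have "\<bar>al\<bar> + \<bar>be+2*real n*al\<bar> + \<bar>p n\<bar> \<le> (\<bar>al\<bar>+\<bar>be\<bar>+\<bar>ga\<bar>) + (2*\<bar>al\<bar>+\<bar>be\<bar>)*real n + \<bar>al\<bar>*real n^2"
      using a1 a2 by (simp add: algebra_simps)
    then show ?thesis unfolding B_def C_def using r by (simp add: mult_left_mono)
  qed
  have C0: "C \<longlonglongrightarrow> 0" unfolding C_def by (rule poly_geom_zero[OF r])
  have "(\<lambda>n. S n - IF) \<longlonglongrightarrow> 0"
  proof (rule Lim_null_comparison[OF _ C0])
    show "\<forall>\<^sub>F n in sequentially. norm (S n - IF) \<le> C n"
      using diffb BC by (auto intro!: always_eventually simp: abs_minus_commute intro: order_trans)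
  qed
  then have "(\<lambda>n. (S n - IF) + IF) \<longlonglongrightarrow> 0 + IF" by (intro tendsto_add tendsto_const)
  then have "S \<longlonglongrightarrow> IF" by simp
  then show ?thesis unfolding sums_def S_def a_def IF_def .
qed



theorem theorem1p3:
  fixes x :: real
  assumes "x > (1 + sqrt 2) / 2 \<or> x < (1 - sqrt 2) / 2"
  shows "((\<lambda>k. ((2 * (2*x - 1)^2 * (2*x - 3) * real k - (4*x^3 - 16*x^2 + 7*x + 6)) * 4^k)
            / ((x * (1 - x))^k * real ((4*k) choose (2*k))))
           sums ((1 - x) * (3 * R x + 4 * x * (x - 3)))) \<and>
         ((\<lambda>k. ((2 * (2*x - 1)^2 * (2*x + 1) * real k - (4*x^3 + 4*x^2 - 13*x - 1)) * 4^k)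
            / ((x * (1 - x))^k * real ((4*k) choose (2*k))))
           sums (- x * (3 * R (1 - x) + 4 * (x - 1) * (x + 2))))"
proof -
  have sq: "sqrt 2 ^ 2 = (2::real)" by simp
  have sq0: "0 \<le> sqrt (2::real)" by simp
  have "(2*x-1)^2 > 2"
    using assms
  proof
    assume "x > (1 + sqrt 2) / 2"
    then have "sqrt 2 < 2*x-1" by simp
    then have "sqrt 2 ^ 2 < (2*x-1)^2" using sq0 by (rule power_strict_mono) simp
    then show ?thesis using sq by simp
  next
    assume "x < (1 - sqrt 2) / 2"
    then have "sqrt 2 < 1-2*x" by simp
    then have "sqrt 2 ^ 2 < (1-2*x)^2" using sq0 by (rule power_strict_mono) simp
    moreover have "(1-2*x)^2 = (2*x-1)^2" by algebra
    ultimately show ?thesis using sq by simp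
  qed
  moreover have "4*x*(1-x) = 1 - (2*x-1)^2" by algebra
  ultimately have h: "4*x*(1-x) < -1" by linarith
  have h': "4*(1-x)*(1-(1-x)) < -1" using h by (simp add: algebra_simps)
  have m2: "(\<lambda>k. - (((2*(2*(1-x)-1)^2*(2*(1-x)-3)*real k - (4*(1-x)^3-16*(1-x)^2+7*(1-x)+6))*4^k) / (((1-x)*(1-(1-x)))^k * real ((4*k) choose (2*k)))))
     sums (- ((1-(1-x))*(3*R (1-x) + 4*(1-x)*((1-x)-3))))"
    by (rule sums_minus[OF main1[OF h']])
  have feq: "(\<lambda>k. - (((2*(2*(1-x)-1)^2*(2*(1-x)-3)*real k - (4*(1-x)^3-16*(1-x)^2+7*(1-x)+6))*4^k) / (((1-x)*(1-(1-x)))^k * real ((4*k) choose (2*k)))))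
     = (\<lambda>k. ((2 * (2*x - 1)^2 * (2*x + 1) * real k - (4*x^3 + 4*x^2 - 13*x - 1)) * 4^k)
            / ((x * (1 - x))^k * real ((4*k) choose (2*k))))"
  proof (rule ext)
    fix k
    have d: "(1-x)*(1-(1-x)) = x*(1-x)" by algebra
    have n: "- ((2*(2*(1-x)-1)^2*(2*(1-x)-3)*real k - (4*(1-x)^3-16*(1-x)^2+7*(1-x)+6))*4^k)
        = (2 * (2*x - 1)^2 * (2*x + 1) * real k - (4*x^3 + 4*x^2 - 13*x - 1)) * 4^k" by algebra
    show "- (((2*(2*(1-x)-1)^2*(2*(1-x)-3)*real k - (4*(1-x)^3-16*(1-x)^2+7*(1-x)+6))*4^k) / (((1-x)*(1-(1-x)))^k * real ((4*k) choose (2*k))))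
        = ((2 * (2*x - 1)^2 * (2*x + 1) * real k - (4*x^3 + 4*x^2 - 13*x - 1)) * 4^k)
            / ((x * (1 - x))^k * real ((4*k) choose (2*k)))"
      unfolding d minus_divide_left n ..
  qed
  have veq: "- ((1-(1-x))*(3*R (1-x) + 4*(1-x)*((1-x)-3))) = - x * (3 * R (1 - x) + 4 * (x - 1) * (x + 2))"
    by algebra
  show ?thesis using main1[OF h] m2 unfolding feq veq by simp
qed

end
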